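(* Let $G=(V,E)$ be a unit disk graph, let $VC^*(G)$ be a minimum vertex cover of $G$, and let $VC(G)$ be the vertex cover output by Heuristic VCover on $G$. Then $|VC(G)| \leq 1.5\,|VC^*(G)|$.
   Context: A graph $G$ is a unit disk graph if its vertices can be put in one-to-one correspondence with closed disks of radius $1$ in the plane so that two vertices are adjacent if and only if the corresponding disks intersect (tangent disks are considered to intersect). A vertex cover of $G$ is a set $V'\subseteq V$ containing at least one endpoint of every edge; for $U\subseteq V$, $G(U)$ denotes the subgraph induced on $U$. Heuristic VCover: (1) Set $V_1=\emptyset$, $V'=V$. (2) While $G(V')$ contains a triangle, pick a set $X\subseteq V'$ such that $G(X)$ is a triangle, and set $V_1 = V_1\cup X$, $V'=V'\setminus X$. (3) For the resulting triangle-free graph $G(V')$, compute (by the Nemhauser–Trotter algorithm, in polynomial time) two disjoint sets $P,Q\subseteq V'$ such that: (i) some minimum vertex cover of $G(V')$ contains $P$; (ii) if $D$ is any vertex cover of $G(Q)$ then $D\cup P$ is a vertex cover of $G(V')$; (iii) every minimum vertex cover of $G(V')$ has size at least $|P|+|Q|/2$. (4) Properly color $G(Q)$ with at most $4$ colors (possible since $G(Q)$ is a triangle-free unit disk graph), and let $S$ be a color class of largest cardinality. (5) Output $VC(G)=V_1\cup P\cup (Q\setminus S)$. *)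

theory Defs
  imports Complex_Main
begin

definition simple_graph :: "'a set \<Rightarrow> 'a set set \<Rightarrow> bool" where
  "simple_graph V E \<longleftrightarrow> finite V \<and> (\<forall>e\<in>E. \<exists>u v. u \<in> V \<and> v \<in> V \<and> u \<noteq> v \<and> e = {u, v})"

text \<open>Unit disk graph: an injective assignment of centres of closed unit disks
  in the plane (identified with the complex numbers), two vertices adjacent iff the disks intersect, i.e. iff the
  Euclidean distance of their centres is at most 2.\<close>

definition unit_disk_graph :: "'a set \<Rightarrow> 'a set set \<Rightarrow> bool" where
  "unit_disk_graph V E \<longleftrightarrow> simple_graph V E \<and>
     (\<exists>c :: 'a \<Rightarrow> complex. inj_on c V \<and>
        (\<forall>u\<in>V. \<forall>v\<in>V. u \<noteq> v \<longrightarrow> ({u, v} \<in> E \<longleftrightarrow> dist (c u) (c v) \<le> 2)))"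

definition induced_edges :: "'a set set \<Rightarrow> 'a set \<Rightarrow> 'a set set" where
  "induced_edges E U = {e \<in> E. e \<subseteq> U}"

definition vertex_cover :: "'a set \<Rightarrow> 'a set set \<Rightarrow> 'a set \<Rightarrow> bool" where
  "vertex_cover V E C \<longleftrightarrow> C \<subseteq> V \<and> (\<forall>e\<in>E. e \<inter> C \<noteq> {})"

definition min_vertex_cover :: "'a set \<Rightarrow> 'a set set \<Rightarrow> 'a set \<Rightarrow> bool" where
  "min_vertex_cover V E C \<longleftrightarrow> vertex_cover V E C \<and>
     (\<forall>C'. vertex_cover V E C' \<longrightarrow> card C \<le> card C')"

definition is_triangle :: "'a set set \<Rightarrow> 'a set \<Rightarrow> bool" where
  "is_triangle E X \<longleftrightarrow> card X = 3 \<and> (\<forall>u\<in>X. \<forall>v\<in>X. u \<noteq> v \<longrightarrow> {u, v} \<in> E)"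

definition triangle_free :: "'a set set \<Rightarrow> 'a set \<Rightarrow> bool" where
  "triangle_free E U \<longleftrightarrow> \<not> (\<exists>X \<subseteq> U. is_triangle E X)"

text \<open>Step (2): the sequence of triangles removed by the loop. Each X_i is a
  triangle of G(V') where V' = V minus the triangles removed earlier.\<close>

fun triangle_sequence :: "'a set \<Rightarrow> 'a set set \<Rightarrow> 'a set list \<Rightarrow> bool" where
  "triangle_sequence V E [] = True"
| "triangle_sequence V E (X # Xs) \<longleftrightarrow>
     X \<subseteq> V \<and> is_triangle E X \<and> triangle_sequence (V - X) E Xs"

text \<open>Step (3): properties (i)-(iii) of the Nemhauser--Trotter output for the
  graph G(V').\<close>

definition NT_pair :: "'a set \<Rightarrow> 'a set set \<Rightarrow> 'a set \<Rightarrow> 'a set \<Rightarrow> bool" where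
  "NT_pair V' E P Q \<longleftrightarrow> P \<subseteq> V' \<and> Q \<subseteq> V' \<and> P \<inter> Q = {} \<and>
     (\<exists>D. min_vertex_cover V' (induced_edges E V') D \<and> P \<subseteq> D) \<and>
     (\<forall>D. vertex_cover Q (induced_edges E Q) D \<longrightarrow>
            vertex_cover V' (induced_edges E V') (D \<union> P)) \<and>
     (\<forall>D. min_vertex_cover V' (induced_edges E V') D \<longrightarrow>
            real (card D) \<ge> real (card P) + real (card Q) / 2)"

definition proper_4_coloring :: "'a set set \<Rightarrow> 'a set \<Rightarrow> ('a \<Rightarrow> nat) \<Rightarrow> bool" where
  "proper_4_coloring E Q col \<longleftrightarrow> (\<forall>v\<in>Q. col v < 4) \<and>
     (\<forall>u\<in>Q. \<forall>v\<in>Q. {u, v} \<in> E \<longrightarrow> col u \<noteq> col v)"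

definition largest_color_class :: "'a set \<Rightarrow> ('a \<Rightarrow> nat) \<Rightarrow> 'a set \<Rightarrow> bool" where
  "largest_color_class Q col S \<longleftrightarrow> (\<exists>k<4. S = {v\<in>Q. col v = k} \<and>
     (\<forall>j<4. card {v\<in>Q. col v = j} \<le> card S))"

text \<open>OUT is a possible output of Heuristic VCover on G = (V,E) (the heuristic
  is nondeterministic in the choice of triangles, of P and Q, and of the colouring).\<close>

definition vcover_output :: "'a set \<Rightarrow> 'a set set \<Rightarrow> 'a set \<Rightarrow> bool" where
  "vcover_output V E OUT \<longleftrightarrow>
     (\<exists>Xs P Q col S.
        triangle_sequence V E Xs \<and>
        (let V1 = \<Union>(set Xs); V' = V - V1 in
          triangle_free E V' \<and>
          NT_pair V' E P Q \<and>
          proper_4_coloring E Q col \<and>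
          largest_color_class Q col S \<and>
          OUT = V1 \<union> P \<union> (Q - S)))"

end

theory Submission
  imports Defs
begin

lemma tri_cover:
  assumes "is_triangle E X" "\<forall>e\<in>E. e \<inter> C \<noteq> {}"
  shows "card (X \<inter> C) \<ge> 2"
proof -
  have c3: "card X = 3" using assms(1) unfolding is_triangle_def by simp
  then have fin: "finite X" by (metis card.infinite zero_neq_numeral)
  have "card (X - C) \<le> 1"
  proof (rule ccontr)
    assume "\<not> card (X - C) \<le> 1"
    then have "card (X - C) \<ge> 2" by simp
    then obtain u v where "u \<in> X - C" "v \<in> X - C" "u \<noteq> v"
      using card_le_Suc0_iff_eq[of "X - C"] fin by auto
    moreover have "{u,v} \<in> E" using assms(1) calculation unfolding is_triangle_def by auto
    ultimately show False using assms(2) by auto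
  qed
  moreover have "card X = card (X \<inter> C) + card (X - C)"
  proof -
    have "card ((X \<inter> C) \<union> (X - C)) = card (X \<inter> C) + card (X - C)"
      by (rule card_Un_disjoint) (use fin in auto)
    moreover have "(X \<inter> C) \<union> (X - C) = X" by blast
    ultimately show ?thesis by simp
  qed
  ultimately show ?thesis using c3 by simp
qed

lemma tri_seq:
  "triangle_sequence W E Xs \<Longrightarrow> finite W \<Longrightarrow> \<forall>e\<in>E. e \<inter> C \<noteq> {} \<Longrightarrow>
   \<Union>(set Xs) \<subseteq> W \<and> 2 * card (\<Union>(set Xs)) \<le> 3 * card (\<Union>(set Xs) \<inter> C)"
proof (induction Xs arbitrary: W)
  case Nil
  then show ?case by simp
next
  case (Cons X Xs)
  let ?R = "\<Union>(set Xs)"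
  have X: "X \<subseteq> W" "is_triangle E X" and T: "triangle_sequence (W - X) E Xs"
    using Cons.prems by auto
  have IH: "?R \<subseteq> W - X" "2 * card ?R \<le> 3 * card (?R \<inter> C)"
    using Cons.IH[OF T] Cons.prems by auto
  have fX: "finite X" using X Cons.prems finite_subset by blast
  have fR: "finite ?R" using IH Cons.prems finite_subset by blast
  have d: "X \<inter> ?R = {}" using IH by auto
  have c3: "card X = 3" using X unfolding is_triangle_def by simp
  have t2: "card (X \<inter> C) \<ge> 2" using tri_cover X Cons.prems by blast
  have "card (X \<union> ?R) = card X + card ?R" using card_Un_disjoint fX fR d by blast
  moreover have "card ((X \<union> ?R) \<inter> C) = card (X \<inter> C) + card (?R \<inter> C)"
    using card_Un_disjoint[of "X \<inter> C" "?R \<inter> C"] fX fR d by (simp add: Int_Un_distrib2 Int_assoc) blast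
  ultimately show ?case using IH X c3 t2 by auto
qed

theorem theorem4p3:
  fixes V :: "'a set" and E :: "'a set set" and Cstar OUT :: "'a set"
  assumes "unit_disk_graph V E"
    and "min_vertex_cover V E Cstar"
    and "vcover_output V E OUT"
  shows "real (card OUT) \<le> 1.5 * real (card Cstar)"
proof -
  have finV: "finite V" using assms(1) unfolding unit_disk_graph_def simple_graph_def by simp
  have CV: "Cstar \<subseteq> V" and cov: "\<forall>e\<in>E. e \<inter> Cstar \<noteq> {}"
    using assms(2) unfolding min_vertex_cover_def vertex_cover_def by auto
  obtain Xs P Q col S where T: "triangle_sequence V E Xs"
    and NT: "NT_pair (V - \<Union>(set Xs)) E P Q"
    and col: "proper_4_coloring E Q col"
    and LC: "largest_color_class Q col S"
    and O: "OUT = \<Union>(set Xs) \<union> P \<union> (Q - S)"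
    using assms(3) unfolding vcover_output_def Let_def by blast
  define V1 where "V1 = \<Union>(set Xs)"
  define V' where "V' = V - V1"
  have V1: "V1 \<subseteq> V" "2 * card V1 \<le> 3 * card (V1 \<inter> Cstar)"
    using tri_seq[OF T finV cov] unfolding V1_def by auto
  have PQ: "P \<subseteq> V'" "Q \<subseteq> V'" "P \<inter> Q = {}" using NT unfolding NT_pair_def V'_def V1_def by auto
  obtain D where D: "min_vertex_cover V' (induced_edges E V') D"
    using NT unfolding NT_pair_def V'_def V1_def by auto
  have Dge: "real (card D) \<ge> real (card P) + real (card Q) / 2"
    using NT D unfolding NT_pair_def V'_def V1_def by auto
  have finV': "finite V'" using finV V'_def by simp
  have "vertex_cover V' (induced_edges E V') (Cstar \<inter> V')"
    unfolding vertex_cover_def induced_edges_def using cov by auto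
  then have Dle: "card D \<le> card (Cstar \<inter> V')" using D unfolding min_vertex_cover_def by blast
  have fQ: "finite Q" using PQ finV' finite_subset by blast
  have fP: "finite P" using PQ finV' finite_subset by blast
  obtain k where k: "k < 4" "S = {v\<in>Q. col v = k}" "\<forall>j<4. card {v\<in>Q. col v = j} \<le> card S"
    using LC unfolding largest_color_class_def by blast
  have SQ: "S \<subseteq> Q" using k by auto
  have "Q = (\<Union>j<4. {v\<in>Q. col v = j})" using col unfolding proper_4_coloring_def by auto
  then have "card Q \<le> (\<Sum>j<4. card {v\<in>Q. col v = j})"
    by (metis card_UN_le finite_lessThan)
  also have "\<dots> \<le> (\<Sum>j<(4::nat). card S)" using k(3) by (intro sum_mono) auto
  finally have Q4: "card Q \<le> 4 * card S" by simp
  have cQS: "card (Q - S) = card Q - card S" using SQ fQ card_Diff_subset finite_subset by metis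
  have "card OUT \<le> card V1 + card P + card (Q - S)"
  proof -
    have "card OUT \<le> card (V1 \<union> P) + card (Q - S)" unfolding O V1_def[symmetric] by (rule card_Un_le)
    moreover have "card (V1 \<union> P) \<le> card V1 + card P" by (rule card_Un_le)
    ultimately show ?thesis by linarith
  qed
  then have o1: "real (card OUT) \<le> real (card V1) + real (card P) + real (card Q) - real (card S)"
  proof -
    have "card S \<le> card Q" by (rule card_mono[OF fQ SQ])
    then have "real (card (Q - S)) = real (card Q) - real (card S)" using cQS by simp
    then show ?thesis using \<open>card OUT \<le> card V1 + card P + card (Q - S)\<close>
      by (metis add_mono_thms_linordered_semiring(3) of_nat_add of_nat_le_iff add_diff_eq)
  qed
  have cs: "card Cstar = card (V1 \<inter> Cstar) + card (Cstar \<inter> V')"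
  proof -
    have "Cstar = (V1 \<inter> Cstar) \<union> (Cstar \<inter> V')" using CV V'_def by auto
    moreover have "finite Cstar" using CV finV finite_subset by blast
    moreover have "card ((V1 \<inter> Cstar) \<union> (Cstar \<inter> V')) = card (V1 \<inter> Cstar) + card (Cstar \<inter> V')"
      by (rule card_Un_disjoint) (use calculation V'_def in auto)
    ultimately show ?thesis by simp
  qed
  show ?thesis using o1 Q4 V1(2) Dge Dle cs
  proof -
    have a: "2 * real (card V1) \<le> 3 * real (card (V1 \<inter> Cstar))" using V1(2) by (metis of_nat_le_iff of_nat_mult of_nat_numeral)
    have b: "real (card Q) \<le> 4 * real (card S)" using Q4 by (metis of_nat_le_iff of_nat_mult of_nat_numeral)
    have c: "real (card D) \<le> real (card (Cstar \<inter> V'))" using Dle by simp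
    have d: "real (card Cstar) = real (card (V1 \<inter> Cstar)) + real (card (Cstar \<inter> V'))" using cs by simp
    show ?thesis using o1 a b c d Dge by linarith
  qed
qed

end
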